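(* Let $k$ and $n$ be integers with $n\geqslant 9$ and $n>k \geqslant e \ln n+e$. Then for every $i\in\{1,2,\ldots,n\}$, the number \[ S(n,i,k)=\sum_{\substack{1 \leqslant i_1<i_2<\cdots<i_k \leqslant n,\\ i_j \neq i \text{ for } j=1,2,\ldots,k}} \frac{1}{i_1 i_2 \cdots i_k} \] is not an integer.
   Context: For integers $n,i,k$ with $1\leqslant k<n$ and $1\leqslant i\leqslant n$, $S(n,i,k)$ denotes the $k$-th elementary symmetric function of the $n-1$ numbers $\{1,1/2,\ldots,1/n\}\setminus\{1/i\}$. Here $e$ is Euler's number and $\ln$ the natural logarithm. *)

theory Defs
  imports Complex_Main
begin

definition S :: "nat \<Rightarrow> nat \<Rightarrow> nat \<Rightarrow> real" where
  "S n i k = (\<Sum>A \<in> {A. A \<subseteq> {1..n} - {i} \<and> card A = k}. 1 / (\<Prod>j\<in>A. real j))"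

end

theory Submission
  imports Defs
begin

definition esym :: "nat set \<Rightarrow> (nat \<Rightarrow> real) \<Rightarrow> nat \<Rightarrow> real" where
  "esym T w k = (\<Sum>A\<in>{A. A \<subseteq> T \<and> card A = k}. prod w A)"

lemma split_sets:
  assumes "finite T" "a \<notin> T"
  shows "{A. A \<subseteq> insert a T \<and> card A = Suc m} =
         {A. A \<subseteq> T \<and> card A = Suc m} \<union> insert a ` {A. A \<subseteq> T \<and> card A = m}"
proof (intro equalityI subsetI)
  fix A assume "A \<in> {A. A \<subseteq> insert a T \<and> card A = Suc m}"
  hence A: "A \<subseteq> insert a T" "card A = Suc m" by auto
  have fA: "finite A" by (rule finite_subset[OF A(1)]) (simp add: assms(1))
  show "A \<in> {A. A \<subseteq> T \<and> card A = Suc m} \<union> insert a ` {A. A \<subseteq> T \<and> card A = m}"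
  proof (cases "a \<in> A")
    case True
    hence "A = insert a (A - {a})" by auto
    moreover have "A - {a} \<in> {A. A \<subseteq> T \<and> card A = m}" using A True fA by auto
    ultimately have "A \<in> insert a ` {A. A \<subseteq> T \<and> card A = m}" by (rule image_eqI)
    thus ?thesis by (rule UnI2)
  next
    case False thus ?thesis using A by auto
  qed
next
  fix A assume "A \<in> {A. A \<subseteq> T \<and> card A = Suc m} \<union> insert a ` {A. A \<subseteq> T \<and> card A = m}"
  then show "A \<in> {A. A \<subseteq> insert a T \<and> card A = Suc m}"
  proof
    assume "A \<in> insert a ` {A. A \<subseteq> T \<and> card A = m}"
    then obtain B where B: "B \<subseteq> T" "card B = m" "A = insert a B" by auto
    have "finite B" by (rule finite_subset[OF B(1) assms(1)])
    moreover have "a \<notin> B" using B(1) assms(2) by auto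
    ultimately show ?thesis using B by auto
  next
    assume "A \<in> {A. A \<subseteq> T \<and> card A = Suc m}"
    thus ?thesis by blast
  qed
qed

lemma esym_insert:
  assumes "finite T" "a \<notin> T"
  shows "esym (insert a T) w (Suc m) = esym T w (Suc m) + w a * esym T w m"
proof -
  have fin: "finite {A. A \<subseteq> T \<and> card A = j}" for j
    by (rule finite_subset[of _ "Pow T"]) (auto simp: assms(1))
  have disj: "{A. A \<subseteq> T \<and> card A = Suc m} \<inter> insert a ` {A. A \<subseteq> T \<and> card A = m} = {}"
    using assms(2) by auto
  have inj: "inj_on (insert a) {A. A \<subseteq> T \<and> card A = m}"
  proof (rule inj_onI)
    fix A B assume AB: "A \<in> {A. A \<subseteq> T \<and> card A = m}" "B \<in> {A. A \<subseteq> T \<and> card A = m}"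
      "insert a A = insert a B"
    have "a \<notin> A" "a \<notin> B" using AB(1,2) assms(2) by auto
    hence "A = insert a A - {a}" "B = insert a B - {a}" by auto
    thus "A = B" using AB(3) by simp
  qed
  have "esym (insert a T) w (Suc m) = esym T w (Suc m) + (\<Sum>A\<in>insert a ` {A. A \<subseteq> T \<and> card A = m}. prod w A)"
    unfolding esym_def split_sets[OF assms] by (rule sum.union_disjoint) (use fin disj in auto)
  also have "(\<Sum>A\<in>insert a ` {A. A \<subseteq> T \<and> card A = m}. prod w A) = (\<Sum>A\<in>{A. A \<subseteq> T \<and> card A = m}. prod w (insert a A))"
    by (rule sum.reindex[OF inj, unfolded comp_def])
  also have "\<dots> = (\<Sum>A\<in>{A. A \<subseteq> T \<and> card A = m}. w a * prod w A)"
  proof (rule sum.cong[OF refl])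
    fix A assume "A \<in> {A. A \<subseteq> T \<and> card A = m}"
    hence AT: "A \<subseteq> T" by simp
    have "finite A" by (rule finite_subset[OF AT assms(1)])
    moreover have "a \<notin> A" using AT assms(2) by blast
    ultimately show "prod w (insert a A) = w a * prod w A" by simp
  qed
  also have "\<dots> = w a * esym T w m" by (simp add: esym_def sum_distrib_left)
  finally show ?thesis .
qed

lemma esym_zero: "finite T \<Longrightarrow> esym T w 0 = 1"
proof -
  assume "finite T"
  hence "A \<subseteq> T \<Longrightarrow> card A = 0 \<Longrightarrow> A = {}" for A
    using finite_subset[of A T] card_0_eq[of A] by blast
  hence "{A. A \<subseteq> T \<and> card A = 0} = {{}}" by auto
  thus ?thesis by (simp add: esym_def)
qed

lemma esym_empty: "esym {} w (Suc m) = 0"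
  by (simp add: esym_def)

lemma bern: fixes s w :: real assumes "0 \<le> s" "0 \<le> w"
  shows "s ^ Suc m + real (Suc m) * w * s ^ m \<le> (s + w) ^ Suc m"
proof (induction m)
  case 0 thus ?case by simp
next
  case (Suc m)
  have "s ^ Suc (Suc m) + real (Suc (Suc m)) * w * s ^ Suc m
     \<le> (s + w) * (s ^ Suc m + real (Suc m) * w * s ^ m)"
    using assms by (simp add: algebra_simps)
  also have "\<dots> \<le> (s + w) * (s + w) ^ Suc m"
    using Suc assms by (intro mult_left_mono) auto
  finally show ?case by simp
qed

lemma esym_nonneg: "finite T \<Longrightarrow> \<forall>j\<in>T. 0 \<le> w j \<Longrightarrow> 0 \<le> esym T w k"
  unfolding esym_def by (intro sum_nonneg prod_nonneg) auto

lemma esym_bound: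
  assumes "finite T" "\<forall>j\<in>T. 0 \<le> w j"
  shows "fact k * esym T w k \<le> (sum w T) ^ k"
  using assms
proof (induction T arbitrary: k rule: finite_induct)
  case empty thus ?case by (cases k) (auto simp: esym_zero esym_empty)
next
  case (insert a T)
  show ?case
  proof (cases k)
    case 0 thus ?thesis using insert by (simp add: esym_zero)
  next
    case (Suc m)
    have w: "0 \<le> w a" "\<forall>j\<in>T. 0 \<le> w j" using insert by auto
    have s: "0 \<le> sum w T" using w by (simp add: sum_nonneg)
    have IH1: "fact (Suc m) * esym T w (Suc m) \<le> sum w T ^ Suc m" using insert.IH w by blast
    have IH2: "fact m * esym T w m \<le> sum w T ^ m" using insert.IH w by blast
    have "fact k * esym (insert a T) w k = fact (Suc m) * esym T w (Suc m) + real (Suc m) * w a * (fact m * esym T w m)"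
      using Suc esym_insert[OF insert(1,2)] by (simp add: algebra_simps)
    also have "\<dots> \<le> sum w T ^ Suc m + real (Suc m) * w a * sum w T ^ m"
      using IH1 IH2 w by (intro add_mono mult_left_mono) auto
    also have "\<dots> \<le> (sum w T + w a) ^ Suc m" by (rule bern[OF s w(1)])
    finally show ?thesis using Suc insert by (simp add: add.commute)
  qed
qed

lemma harm_bound: "n \<ge> 1 \<Longrightarrow> (\<Sum>j=1..n. 1 / real j) \<le> 1 + ln (real n)"
proof (induction n rule: dec_induct)
  case base thus ?case by simp
next
  case (step n)
  have "ln (real n / real (Suc n)) \<le> real n / real (Suc n) - 1"
    using step by (intro ln_le_minus_one) auto
  also have "\<dots> = - 1 / real (Suc n)" by (simp add: field_simps)
  finally have "1 / real (Suc n) \<le> ln (real (Suc n)) - ln (real n)"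
    using step by (simp add: ln_div)
  thus ?case using step by simp
qed

lemma fact_bound: "real k ^ k / fact k \<le> exp (real k)"
proof -
  have "(\<Sum>m\<in>{k}. real k ^ m /\<^sub>R fact m) \<le> (\<Sum>m. real k ^ m /\<^sub>R fact m)"
    by (rule sum_le_suminf) (rule summable_exp_generic, simp, simp)
  thus ?thesis by (simp add: exp_def divide_inverse mult.commute)
qed


theorem lemma2p3:
  fixes n k i :: nat
  assumes "n \<ge> 9" and "k < n" and "real k \<ge> exp 1 * ln (real n) + exp 1"
    and "i \<in> {1..n}"
  shows "S n i k \<notin> \<int>"
proof
  assume Sint: "S n i k \<in> \<int>"
  define T where "T = {1..n} - {i}"
  define w where "w = (\<lambda>j::nat. 1 / real j)"
  have finT: "finite T" by (simp add: T_def)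
  have wnn: "\<forall>j\<in>T. 0 \<le> w j" by (simp add: w_def)
  have Seq: "S n i k = esym T w k"
    unfolding S_def esym_def T_def w_def
    by (rule sum.cong[OF refl]) (simp add: prod_dividef)
  have lnn: "0 \<le> ln (real n)" using assms(1) by simp
  have kpos: "k > 0"
  proof -
    have "0 < exp 1 * ln (real n) + exp 1" using lnn by (simp add: add_nonneg_pos)
    thus ?thesis using assms(3) by linarith
  qed
  define s where "s = sum w T"
  have s_eq: "s = (\<Sum>j=1..n. 1 / real j) - 1 / real i"
    unfolding s_def T_def w_def using assms(4) by (simp add: sum_diff1)
  have ipos: "0 < 1 / real i" using assms(4) by simp
  have s_lt: "s < 1 + ln (real n)"
    using s_eq harm_bound[of n] assms(1) ipos by linarith
  have s_nn: "0 \<le> s" unfolding s_def using wnn by (simp add: sum_nonneg)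
  have "fact k * S n i k \<le> s ^ k" using esym_bound[OF finT wnn] Seq s_def by simp
  hence S_le: "S n i k \<le> s ^ k / fact k" by (simp add: field_simps)
  have sk: "s ^ k < (1 + ln (real n)) ^ k"
    using s_lt s_nn kpos by (intro power_strict_mono) auto
  have S_lt: "S n i k < (1 + ln (real n)) ^ k / fact k"
    using S_le divide_strict_right_mono[OF sk, of "fact k"] by simp
  have fb: "1 / fact k \<le> exp (real k) / real k ^ k"
    using fact_bound[of k] kpos by (simp add: field_simps)
  have "(1 + ln (real n)) ^ k / fact k \<le> (1 + ln (real n)) ^ k * (exp (real k) / real k ^ k)"
    using mult_left_mono[OF fb, of "(1 + ln (real n)) ^ k"] lnn by simp
  also have "\<dots> = (exp 1 * (1 + ln (real n)) / real k) ^ k"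
    using exp_of_nat_mult[of k "1::real"] by (simp add: power_divide power_mult_distrib)
  also have "\<dots> \<le> 1"
  proof (rule power_le_one)
    show "0 \<le> exp 1 * (1 + ln (real n)) / real k" using lnn by simp
    show "exp 1 * (1 + ln (real n)) / real k \<le> 1"
      using assms(3) kpos by (simp add: field_simps)
  qed
  finally have S1: "S n i k < 1" using S_lt by linarith
  have cardT: "k \<le> card T" using assms(2,4) by (simp add: T_def)
  then obtain A where A: "A \<subseteq> T" "card A = k" "finite A" using obtain_subset_with_card_n[OF cardT] by metis
  have fin: "finite {A. A \<subseteq> T \<and> card A = k}"
    by (rule finite_subset[of _ "Pow T"]) (auto simp: finT)
  have "0 < esym T w k" unfolding esym_def
  proof (rule sum_pos2[OF fin])
    show "A \<in> {A. A \<subseteq> T \<and> card A = k}" using A by simp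
    have "\<And>j. j \<in> A \<Longrightarrow> 0 < w j" using A(1) by (auto simp: T_def w_def)
    thus "0 < prod w A" by (rule prod_pos)
    show "\<And>B. B \<in> {A. A \<subseteq> T \<and> card A = k} \<Longrightarrow> 0 \<le> prod w B"
      using wnn by (auto intro!: prod_nonneg)
  qed
  hence S0: "0 < S n i k" using Seq by simp
  from Sint obtain z where z: "S n i k = of_int z" by (auto elim: Ints_cases)
  show False using S0 S1 unfolding z by simp
qed

end
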